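(* Let $\mu$ be an infinite cardinal, $\langle\mathbb{Q}_i:i\in I\rangle$ a sequence of posets such that each $\mathbb{Q}_i=\bigcup_{\zeta<\mu}Q_{i,\zeta}$ with each $Q_{i,\zeta}$ an $\mathrm{Fr}$-linked subset of $\mathbb{Q}_i$, and let $\mathbb{P}$ be the finite support product of $\langle\mathbb{Q}_i:i\in I\rangle$. Assume (i) $|I|\leq 2^\mu$, and (ii) for every finite $u\subseteq I$ and every $s:u\to\mu$, $\prod_{i\in u}Q_{i,s(i)}$ is $\mathrm{Fr}$-linked in $\prod_{i\in u}\mathbb{Q}_i$. Then $\mathbb{P}$ is $\mu$-$\mathrm{Fr}$-linked.
   Context: For a poset $\mathbb{P}$ and $\bar p=\langle p_n:n<\omega\rangle$ in $\mathbb{P}$, $\dot W(\bar p)$ names $\{n:p_n\in\dot G\}$. $Q\subseteq\mathbb{P}$ is $\mathrm{Fr}$-linked if for every sequence $\bar p$ in $Q$ some $q\in\mathbb{P}$ forces $\dot W(\bar p)$ infinite. $\mathbb{P}$ is $\mu$-$\mathrm{Fr}$-linked if it is a union of $\mu$ many $\mathrm{Fr}$-linked subsets. *)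

theory Defs
  imports Main
begin

text \<open>A forcing poset is given by a carrier set P and an order relation le,
  where le q p means q is stronger than (extends) p.\<close>

definition poset :: "'a set \<Rightarrow> ('a \<Rightarrow> 'a \<Rightarrow> bool) \<Rightarrow> bool" where
  "poset P le \<longleftrightarrow> (\<forall>p\<in>P. le p p)
     \<and> (\<forall>p\<in>P. \<forall>q\<in>P. \<forall>r\<in>P. le p q \<longrightarrow> le q r \<longrightarrow> le p r)
     \<and> (\<forall>p\<in>P. \<forall>q\<in>P. le p q \<longrightarrow> le q p \<longrightarrow> p = q)"

definition compat :: "'a set \<Rightarrow> ('a \<Rightarrow> 'a \<Rightarrow> bool) \<Rightarrow> 'a \<Rightarrow> 'a \<Rightarrow> bool" where
  "compat P le p q \<longleftrightarrow> (\<exists>r\<in>P. le r p \<and> le r q)"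

text \<open>q forces that W(pbar) = {n. p n in G} is infinite, expressed via the
  forcing relation: for every m, the set of p n with n at least m is predense below q.\<close>

definition forces_W_infinite ::
  "'a set \<Rightarrow> ('a \<Rightarrow> 'a \<Rightarrow> bool) \<Rightarrow> 'a \<Rightarrow> (nat \<Rightarrow> 'a) \<Rightarrow> bool" where
  "forces_W_infinite P le q p \<longleftrightarrow>
     (\<forall>r\<in>P. le r q \<longrightarrow> (\<forall>m. \<exists>n\<ge>m. compat P le r (p n)))"

definition Fr_linked :: "'a set \<Rightarrow> ('a \<Rightarrow> 'a \<Rightarrow> bool) \<Rightarrow> 'a set \<Rightarrow> bool" where
  "Fr_linked P le Q \<longleftrightarrow> Q \<subseteq> P \<and>
     (\<forall>p. (\<forall>n. p n \<in> Q) \<longrightarrow> (\<exists>q\<in>P. forces_W_infinite P le q p))"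

text \<open>mu-Fr-linked, where mu is the cardinality of the index set Z.\<close>

definition mu_Fr_linked :: "'a set \<Rightarrow> ('a \<Rightarrow> 'a \<Rightarrow> bool) \<Rightarrow> 'z set \<Rightarrow> bool" where
  "mu_Fr_linked P le Z \<longleftrightarrow>
     (\<exists>F. (\<forall>z\<in>Z. Fr_linked P le (F z)) \<and> P = (\<Union>z\<in>Z. F z))"

definition fs_prod :: "'i set \<Rightarrow> ('i \<Rightarrow> 'a set) \<Rightarrow> ('i \<Rightarrow> 'a option) set" where
  "fs_prod I Q = {p. finite (dom p) \<and> dom p \<subseteq> I \<and> (\<forall>i\<in>dom p. the (p i) \<in> Q i)}"

definition fs_le :: "('i \<Rightarrow> 'a \<Rightarrow> 'a \<Rightarrow> bool) \<Rightarrow> ('i \<Rightarrow> 'a option) \<Rightarrow> ('i \<Rightarrow> 'a option) \<Rightarrow> bool" where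
  "fs_le le q p \<longleftrightarrow> dom p \<subseteq> dom q \<and> (\<forall>i\<in>dom p. le i (the (q i)) (the (p i)))"

definition full_prod :: "'i set \<Rightarrow> ('i \<Rightarrow> 'a set) \<Rightarrow> ('i \<Rightarrow> 'a option) set" where
  "full_prod u Q = {p. dom p = u \<and> (\<forall>i\<in>u. the (p i) \<in> Q i)}"

end

theory Submission
  imports Defs "HOL-Library.Infinite_Set"
begin

lemma weak_delta:
  "(\<forall>n. finite (u n) \<and> card (u n) \<le> k) \<Longrightarrow>
   \<exists>g v. strict_mono (g::nat\<Rightarrow>nat) \<and> (\<forall>n. v \<subseteq> u (g n)) \<and> (\<forall>i. i \<notin> v \<longrightarrow> finite {n. i \<in> u (g n)})"
proof (induction k arbitrary: u)
  case 0
  then have "\<forall>n. u n = {}" by (metis card_0_eq le_zero_eq)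
  then show ?case by (intro exI[where x=id] exI[where x="{}"] conjI) (auto simp: strict_mono_def)
next
  case (Suc k)
  show ?case
  proof (cases "\<forall>i. finite {n. i \<in> u n}")
    case True
    then show ?thesis by (intro exI[where x=id] exI[where x="{}"] conjI) (auto simp: strict_mono_def)
  next
    case False
    then obtain i where inf: "infinite {n. i \<in> u n}" by auto
    define e where "e = enumerate {n. i \<in> u n}"
    have e_mono: "strict_mono e" unfolding e_def using strict_mono_enumerate[OF inf] .
    have e_in: "i \<in> u (e n)" for n unfolding e_def using enumerate_in_set[OF inf] by auto
    have "\<forall>n. finite (u (e n) - {i}) \<and> card (u (e n) - {i}) \<le> k"
    proof
      fix n
      have "finite (u (e n))" "card (u (e n)) \<le> Suc k" using Suc.prems by auto
      then show "finite (u (e n) - {i}) \<and> card (u (e n) - {i}) \<le> k"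
        proof -
          have "card (u (e n) - {i}) = card (u (e n)) - 1" using e_in[of n] by (rule card_Diff_singleton)
          moreover have "finite (u (e n) - {i})" using \<open>finite (u (e n))\<close> by (rule finite_Diff)
          ultimately show ?thesis using \<open>card (u (e n)) \<le> Suc k\<close> by (intro conjI) linarith+
        qed
    qed
    from Suc.IH[OF this] obtain g :: "nat \<Rightarrow> nat" and v where gg: "strict_mono g \<and> (\<forall>n. v \<subseteq> u (e (g n)) - {i}) \<and>
       (\<forall>j. j \<notin> v \<longrightarrow> finite {n. j \<in> u (e (g n)) - {i}})" by blast
    note g = gg[THEN conjunct1] gg[THEN conjunct2, THEN conjunct1] gg[THEN conjunct2, THEN conjunct2]
    define g' where "g' = e \<circ> g"
    define v' where "v' = insert i v"
    have 1: "strict_mono g'" using e_mono g(1) unfolding g'_def by (simp add: strict_mono_def)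
    have 2: "\<forall>n. v' \<subseteq> u (g' n)" using g(2) e_in unfolding g'_def v'_def by auto
    have 3: "\<forall>j. j \<notin> v' \<longrightarrow> finite {n. j \<in> u (g' n)}"
    proof (intro allI impI)
      fix j assume that: "j \<notin> v'"
      have "finite {n. j \<in> u (e (g n)) - {i}}" using g(3) that unfolding v'_def by blast
      moreover have "{n. j \<in> u (e (g n)) - {i}} = {n. j \<in> u (g' n)}" using that unfolding v'_def g'_def by auto
      ultimately show "finite {n. j \<in> u (g' n)}" by simp
    qed
    show ?thesis
      by (rule exI[where x=g'], rule exI[where x=v'], intro conjI 1 2 3)
  qed
qed
lemma encode_lists:
  assumes "infinite (Z::'z set)"
  shows "\<exists>c. inj_on c (lists (lists Z)) \<and> c ` lists (lists Z) \<subseteq> Z"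
proof -
  have "\<exists>pi. inj_on pi (Z \<times> Z) \<and> pi ` (Z \<times> Z) \<subseteq> Z"
    using card_of_ordLeq[THEN iffD2, OF ordIso_imp_ordLeq[OF card_of_Times_same_infinite[OF assms]]] .
  then obtain pi :: "'z \<times> 'z \<Rightarrow> 'z" where pi: "inj_on pi (Z \<times> Z)" "pi ` (Z \<times> Z) \<subseteq> Z" by blast
  obtain nu :: "nat \<Rightarrow> 'z" where nu: "inj nu" "range nu \<subseteq> Z" using infinite_countable_subset[OF assms] by auto
  define cd where "cd = rec_list (nu 0) (\<lambda>x xs r. pi (x, r))"
  have cd_Z: "xs \<in> lists Z \<Longrightarrow> cd xs \<in> Z" for xs
  proof (induction xs)
    case Nil then show ?case using nu by (auto simp: cd_def)
  next
    case (Cons x xs) then have "(x, cd xs) \<in> Z \<times> Z" by simp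
    then show ?case using pi(2) by (auto simp: cd_def)
  qed
  have cd_inj: "xs \<in> lists Z \<Longrightarrow> ys \<in> lists Z \<Longrightarrow> length xs = length ys \<Longrightarrow> cd xs = cd ys \<Longrightarrow> xs = ys" for xs ys
  proof (induction xs arbitrary: ys)
    case Nil then show ?case by auto
  next
    case (Cons x xs)
    then obtain y ys' where ys: "ys = y # ys'" by (cases ys) auto
    have eq: "pi (x, cd xs) = pi (y, cd ys')" using Cons.prems ys by (simp add: cd_def)
    have "(x, cd xs) = (y, cd ys')"
      by (rule inj_onD[OF pi(1) eq]) (use Cons.prems ys cd_Z in auto)
    then show ?case using Cons ys by auto
  qed
  define enc where "enc xs = pi (nu (length xs), cd xs)" for xs
  have enc_Z: "xs \<in> lists Z \<Longrightarrow> enc xs \<in> Z" for xs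
  proof -
    assume "xs \<in> lists Z"
    then have "(nu (length xs), cd xs) \<in> Z \<times> Z" using nu cd_Z by auto
    then show ?thesis using pi(2) by (auto simp: enc_def)
  qed
  have enc_inj: "inj_on enc (lists Z)"
  proof (rule inj_onI)
    fix xs ys assume a: "xs \<in> lists Z" "ys \<in> lists Z" "enc xs = enc ys"
    have "(nu (length xs), cd xs) = (nu (length ys), cd ys)"
      by (rule inj_onD[OF pi(1) a(3)[unfolded enc_def]]) (use a nu cd_Z in auto)
    then have "length xs = length ys" "cd xs = cd ys" using nu(1) by (auto dest: injD)
    then show "xs = ys" using cd_inj a by blast
  qed
  have mi: "inj_on (map enc) (lists (lists Z))"
    by (rule inj_on_mapI, rule inj_on_subset[OF enc_inj]) auto
  have ms: "map enc ` lists (lists Z) \<subseteq> lists Z" using enc_Z by auto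
  have "inj_on (enc \<circ> map enc) (lists (lists Z))"
    by (rule comp_inj_on[OF mi inj_on_subset[OF enc_inj ms]])
  moreover have "(enc \<circ> map enc) ` lists (lists Z) \<subseteq> Z"
    using ms enc_Z by (metis comp_apply image_subset_iff rev_image_eqI)
  ultimately show ?thesis by blast
qed

definition hL :: "('i \<Rightarrow> 'z set) \<Rightarrow> 'z list list \<Rightarrow> 'i \<Rightarrow> 'z" where
  "hL f L i = (let D = (\<Union>e\<in>set L. set (tl e)) in
    if \<exists>e\<in>set L. e \<noteq> [] \<and> set (tl e) = f i \<inter> D
    then hd (SOME e. e \<in> set L \<and> e \<noteq> [] \<and> set (tl e) = f i \<inter> D) else undefined)"

definition piece :: "'i set \<Rightarrow> ('i \<Rightarrow> 'a set) \<Rightarrow> ('i \<Rightarrow> 'z \<Rightarrow> 'a set) \<Rightarrow> 'z set \<Rightarrow> ('i \<Rightarrow> 'z) \<Rightarrow> nat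
    \<Rightarrow> ('i \<Rightarrow> 'a option) set" where
  "piece I Q Qz Z h k = {p \<in> fs_prod I Q. card (dom p) = k \<and> (\<forall>i\<in>dom p. h i \<in> Z \<and> the (p i) \<in> Qz i (h i))}"

lemma piece_linked:
  fixes I :: "'i set" and Z :: "'z set"
    and Q :: "'i \<Rightarrow> 'a set" and le :: "'i \<Rightarrow> 'a \<Rightarrow> 'a \<Rightarrow> bool"
    and Qz :: "'i \<Rightarrow> 'z \<Rightarrow> 'a set"
  assumes refl: "\<And>i x. i \<in> I \<Longrightarrow> x \<in> Q i \<Longrightarrow> le i x x"
    and prod_linked: "\<forall>u s. finite u \<longrightarrow> u \<subseteq> I \<longrightarrow> s ` u \<subseteq> Z \<longrightarrow>
        Fr_linked (full_prod u Q) (fs_le le) (full_prod u (\<lambda>i. Qz i (s i)))"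
  shows "Fr_linked (fs_prod I Q) (fs_le le) (piece I Q Qz Z h k)"
  unfolding Fr_linked_def
proof (intro conjI allI impI)
  show "piece I Q Qz Z h k \<subseteq> fs_prod I Q" unfolding piece_def by blast
  fix p :: "nat \<Rightarrow> 'i \<Rightarrow> 'a option"
  assume pn: "\<forall>n. p n \<in> piece I Q Qz Z h k"
  have pP: "p n \<in> fs_prod I Q" for n using pn unfolding piece_def by blast
  have fin: "finite (dom (p n))" "dom (p n) \<subseteq> I" "\<forall>i\<in>dom (p n). the (p n i) \<in> Q i" for n
    using pP[of n] unfolding fs_prod_def by auto
  have pc: "card (dom (p n)) = k" "\<forall>i\<in>dom (p n). h i \<in> Z \<and> the (p n i) \<in> Qz i (h i)" for n
    using pn unfolding piece_def by auto
  have "\<forall>n. finite (dom (p n)) \<and> card (dom (p n)) \<le> k" using fin pc by auto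
  from weak_delta[OF this] obtain g :: "nat \<Rightarrow> nat" and v where
    gv: "strict_mono g \<and> (\<forall>n. v \<subseteq> dom (p (g n))) \<and> (\<forall>i. i \<notin> v \<longrightarrow> finite {n. i \<in> dom (p (g n))})"
    by blast
  have g1: "strict_mono g" and g2: "\<And>n. v \<subseteq> dom (p (g n))"
    and g3: "\<And>i. i \<notin> v \<Longrightarrow> finite {n. i \<in> dom (p (g n))}" using gv by auto
  have vfin: "finite v" using g2[of 0] fin(1)[of "g 0"] by (rule finite_subset)
  have vI: "v \<subseteq> I" using g2[of 0] fin(2)[of "g 0"] by blast
  have hv: "h ` v \<subseteq> Z" using g2[of 0] pc(2)[of "g 0"] by blast
  define pr where "pr n = p (g n) |` v" for n
  have pr_in: "pr n \<in> full_prod v (\<lambda>i. Qz i (h i))" for n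
  proof -
    have "dom (pr n) = v" using g2[of n] unfolding pr_def by auto
    moreover have "\<forall>i\<in>v. the (pr n i) \<in> Qz i (h i)"
      using g2[of n] pc(2)[of "g n"] unfolding pr_def by auto
    ultimately show ?thesis unfolding full_prod_def by blast
  qed
  have "Fr_linked (full_prod v Q) (fs_le le) (full_prod v (\<lambda>i. Qz i (h i)))"
    using prod_linked vfin vI hv by blast
  then obtain q where qin: "q \<in> full_prod v Q" and fwi: "forces_W_infinite (full_prod v Q) (fs_le le) q pr"
    unfolding Fr_linked_def using pr_in by blast
  have domq: "dom q = v" and qQ: "\<forall>i\<in>v. the (q i) \<in> Q i" using qin unfolding full_prod_def by auto
  show "\<exists>q\<in>fs_prod I Q. forces_W_infinite (fs_prod I Q) (fs_le le) q p"
  proof (rule bexI[of _ q])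
    show "q \<in> fs_prod I Q" using domq qQ vfin vI unfolding fs_prod_def by auto
    show "forces_W_infinite (fs_prod I Q) (fs_le le) q p"
      unfolding forces_W_infinite_def
    proof (intro ballI impI allI)
      fix r m assume rP: "r \<in> fs_prod I Q" and rq: "fs_le le r q"
      have rfin: "finite (dom r)" "dom r \<subseteq> I" "\<forall>i\<in>dom r. the (r i) \<in> Q i"
        using rP unfolding fs_prod_def by auto
      have vr: "v \<subseteq> dom r" and rqle: "\<forall>i\<in>v. le i (the (r i)) (the (q i))"
        using rq domq unfolding fs_le_def by auto
      have rv_in: "r |` v \<in> full_prod v Q" using vr rfin(3) unfolding full_prod_def by auto
      have rv_le: "fs_le le (r |` v) q" using vr rqle domq unfolding fs_le_def by auto
      define B where "B = (\<Union>j\<in>dom r - v. {n. j \<in> dom (p (g n))})"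
      have "finite B" unfolding B_def using rfin(1) g3 by blast
      then obtain M where M: "\<forall>n\<in>B. n < M" using finite_nat_set_iff_bounded by blast
      from fwi rv_in rv_le obtain n where n: "n \<ge> max m M"
        and cp: "compat (full_prod v Q) (fs_le le) (r |` v) (pr n)"
        unfolding forces_W_infinite_def by blast
      from cp obtain t where tin: "t \<in> full_prod v Q" and tr: "fs_le le t (r |` v)"
        and tp: "fs_le le t (pr n)" unfolding compat_def by blast
      have domt: "dom t = v" and tQ: "\<forall>i\<in>v. the (t i) \<in> Q i" using tin unfolding full_prod_def by auto
      have nB: "n \<notin> B" using M n by auto
      have disj: "\<And>j. j \<in> dom r \<Longrightarrow> j \<in> dom (p (g n)) \<Longrightarrow> j \<in> v"
        using nB unfolding B_def by blast
      define w where "w = (\<lambda>i. if i \<in> v then t i else if i \<in> dom r then r i else p (g n) i)"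
      have domw: "dom w = v \<union> dom r \<union> dom (p (g n))"
        using domt unfolding w_def by (auto simp: dom_def split: if_splits)
      have wP: "w \<in> fs_prod I Q"
        unfolding fs_prod_def
      proof (intro CollectI conjI ballI)
        show "finite (dom w)" using domw vfin rfin(1) fin(1) by simp
        show "dom w \<subseteq> I" using domw vI rfin(2) fin(2) by blast
        fix i assume "i \<in> dom w"
        then show "the (w i) \<in> Q i" using tQ rfin(3) fin(3)[of "g n"] domw unfolding w_def by auto
      qed
      have wr: "fs_le le w r"
        unfolding fs_le_def
      proof (intro conjI ballI)
        show "dom r \<subseteq> dom w" using domw by blast
        fix i assume ir: "i \<in> dom r"
        show "le i (the (w i)) (the (r i))"
        proof (cases "i \<in> v")
          case True
          then have "le i (the (t i)) (the ((r |` v) i))" using tr ir unfolding fs_le_def by auto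
          then show ?thesis using True unfolding w_def by simp
        next
          case False
          have "i \<in> I" "the (r i) \<in> Q i" using ir rfin by auto
          then show ?thesis using False ir refl unfolding w_def by auto
        qed
      qed
      have wp: "fs_le le w (p (g n))"
        unfolding fs_le_def
      proof (intro conjI ballI)
        show "dom (p (g n)) \<subseteq> dom w" using domw by blast
        fix i assume ip: "i \<in> dom (p (g n))"
        show "le i (the (w i)) (the (p (g n) i))"
        proof (cases "i \<in> v")
          case True
          then have "i \<in> dom (pr n)" using ip unfolding pr_def by auto
          then have "le i (the (t i)) (the (pr n i))" using tp unfolding fs_le_def by auto
          then show ?thesis using True unfolding w_def pr_def by simp
        next
          case False
          then have "i \<notin> dom r" using disj ip by blast
          moreover have "i \<in> I" "the (p (g n) i) \<in> Q i" using ip fin[of "g n"] by auto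
          ultimately show ?thesis using False ip refl unfolding w_def by auto
        qed
      qed
      have "compat (fs_prod I Q) (fs_le le) r (p (g n))"
        unfolding compat_def using wP wr wp by blast
      moreover have "g n \<ge> m" using strict_mono_imp_increasing[OF g1, of n] n by simp
      ultimately show "\<exists>n'\<ge>m. compat (fs_prod I Q) (fs_le le) r (p n')" by blast
    qed
  qed
qed

lemma cover_piece:
  fixes I :: "'i set" and Z :: "'z set"
    and Q :: "'i \<Rightarrow> 'a set" and Qz :: "'i \<Rightarrow> 'z \<Rightarrow> 'a set"
  assumes cover: "\<forall>i\<in>I. Q i = (\<Union>\<zeta>\<in>Z. Qz i \<zeta>)"
    and finj: "inj_on f I" and fZ: "f ` I \<subseteq> Pow Z"
    and pP: "p \<in> fs_prod I Q"
  shows "\<exists>L\<in>lists (lists Z). p \<in> piece I Q Qz Z (hL f L) (length L)"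
proof -
  define u where "u = dom p"
  have ufin: "finite u" and uI: "u \<subseteq> I" and pQ: "\<forall>i\<in>u. the (p i) \<in> Q i"
    using pP unfolding fs_prod_def u_def by auto
  define s where "s i = (SOME \<zeta>. \<zeta> \<in> Z \<and> the (p i) \<in> Qz i \<zeta>)" for i
  have s: "s i \<in> Z \<and> the (p i) \<in> Qz i (s i)" if "i \<in> u" for i
  proof -
    have "\<exists>\<zeta>. \<zeta> \<in> Z \<and> the (p i) \<in> Qz i \<zeta>" using pQ cover uI that by blast
    then show ?thesis unfolding s_def by (rule someI_ex)
  qed
  define d where "d ij = (SOME z. z \<in> Z \<and> (z \<in> f (fst ij) \<longleftrightarrow> z \<notin> f (snd ij)))" for ij
  have d: "d (i, j) \<in> Z \<and> (d (i, j) \<in> f i \<longleftrightarrow> d (i, j) \<notin> f j)" if "i \<in> u" "j \<in> u" "i \<noteq> j" for i j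
  proof -
    have "f i \<noteq> f j" using finj uI that by (auto dest: inj_onD)
    moreover have "f i \<subseteq> Z" "f j \<subseteq> Z" using fZ uI that by auto
    ultimately have "\<exists>z. z \<in> Z \<and> (z \<in> f i \<longleftrightarrow> z \<notin> f j)" by blast
    from someI_ex[OF this] show ?thesis unfolding d_def by simp
  qed
  define D where "D = d ` {ij \<in> u \<times> u. fst ij \<noteq> snd ij}"
  have Dfin: "finite D" unfolding D_def using ufin by simp
  have DZ: "D \<subseteq> Z" unfolding D_def using d by auto
  have sep: "f i \<inter> D \<noteq> f j \<inter> D" if "i \<in> u" "j \<in> u" "i \<noteq> j" for i j
  proof -
    have "d (i, j) \<in> D" unfolding D_def using that by force
    then show ?thesis using d[OF that] by blast
  qed
  define T where "T i = f i \<inter> D" for i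
  define lst where "lst i = (SOME xs. set xs = T i)" for i
  have lst: "set (lst i) = T i" for i
    unfolding lst_def T_def by (rule someI_ex) (use Dfin finite_list in blast)
  obtain xs where xs: "set xs = u" "distinct xs" using finite_distinct_list[OF ufin] by blast
  define L where "L = map (\<lambda>i. s i # lst i) xs"
  have LZ: "L \<in> lists (lists Z)" unfolding L_def using xs s lst DZ unfolding T_def by fastforce
  have lenL: "length L = card u" unfolding L_def using xs distinct_card by fastforce
  have setL: "set L = (\<lambda>i. s i # lst i) ` u" unfolding L_def using xs by simp
  define DL where "DL = (\<Union>e\<in>set L. set (tl e))"
  have DL: "DL = (\<Union>i\<in>u. T i)" unfolding DL_def setL using lst by auto
  have fDL: "f i \<inter> DL = T i" if "i \<in> u" for i
    using that unfolding DL T_def by auto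
  have hLi: "hL f L i = s i" if iu: "i \<in> u" for i
  proof -
    have ex: "\<exists>e\<in>set L. e \<noteq> [] \<and> set (tl e) = f i \<inter> DL"
      using iu fDL[OF iu] lst setL by (intro bexI[of _ "s i # lst i"]) auto
    define e where "e = (SOME e. e \<in> set L \<and> e \<noteq> [] \<and> set (tl e) = f i \<inter> DL)"
    have e: "e \<in> set L \<and> e \<noteq> [] \<and> set (tl e) = f i \<inter> DL"
      unfolding e_def using ex by (rule_tac someI_ex) blast
    then obtain j where j: "j \<in> u" "e = s j # lst j" using setL by auto
    have "T j = T i" using e j fDL[OF iu] lst by simp
    then have "j = i" using sep j(1) iu unfolding T_def by blast
    have "hL f L i = hd e" unfolding hL_def Let_def DL_def[symmetric] e_def using ex by simp
    then show ?thesis using j \<open>j = i\<close> by simp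
  qed
  have "p \<in> piece I Q Qz Z (hL f L) (length L)"
    unfolding piece_def using pP lenL hLi s unfolding u_def by auto
  then show ?thesis using LZ by blast
qed

theorem theorem3p22:
  fixes I :: "'i set" and Z :: "'z set"
    and Q :: "'i \<Rightarrow> 'a set" and le :: "'i \<Rightarrow> 'a \<Rightarrow> 'a \<Rightarrow> bool"
    and Qz :: "'i \<Rightarrow> 'z \<Rightarrow> 'a set"
  assumes mu_inf: "infinite Z"
    and posets: "\<forall>i\<in>I. poset (Q i) (le i)"
    and cover: "\<forall>i\<in>I. Q i = (\<Union>\<zeta>\<in>Z. Qz i \<zeta>)"
    and linked: "\<forall>i\<in>I. \<forall>\<zeta>\<in>Z. Fr_linked (Q i) (le i) (Qz i \<zeta>)"
    and card_I: "\<exists>f. inj_on f I \<and> f ` I \<subseteq> Pow Z"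
    and prod_linked: "\<forall>u s. finite u \<longrightarrow> u \<subseteq> I \<longrightarrow> s ` u \<subseteq> Z \<longrightarrow>
        Fr_linked (full_prod u Q) (fs_le le) (full_prod u (\<lambda>i. Qz i (s i)))"
  shows "mu_Fr_linked (fs_prod I Q) (fs_le le) Z"
proof -
  obtain f where finj: "inj_on f I" and fZ: "f ` I \<subseteq> Pow Z" using card_I by blast
  obtain c where cinj: "inj_on c (lists (lists Z))" and cZ: "c ` lists (lists Z) \<subseteq> Z"
    using encode_lists[OF mu_inf] by blast
  have refl: "\<And>i x. i \<in> I \<Longrightarrow> x \<in> Q i \<Longrightarrow> le i x x" using posets unfolding poset_def by blast
  define G where "G z = inv_into (lists (lists Z)) c z" for z
  define F where "F z = piece I Q Qz Z (hL f (G z)) (length (G z))" for z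
  have "\<forall>z\<in>Z. Fr_linked (fs_prod I Q) (fs_le le) (F z)"
    unfolding F_def using piece_linked[OF refl prod_linked] by blast
  moreover have "fs_prod I Q = (\<Union>z\<in>Z. F z)"
  proof
    show "(\<Union>z\<in>Z. F z) \<subseteq> fs_prod I Q" unfolding F_def piece_def by blast
    show "fs_prod I Q \<subseteq> (\<Union>z\<in>Z. F z)"
    proof
      fix p assume "p \<in> fs_prod I Q"
      then obtain L where L: "L \<in> lists (lists Z)" "p \<in> piece I Q Qz Z (hL f L) (length L)"
        using cover_piece[OF cover finj fZ] by blast
      have "G (c L) = L" unfolding G_def using inv_into_f_f[OF cinj L(1)] .
      then have "p \<in> F (c L)" unfolding F_def using L(2) by simp
      moreover have "c L \<in> Z" using cZ L(1) by blast
      ultimately show "p \<in> (\<Union>z\<in>Z. F z)" by blast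
    qed
  qed
  ultimately show ?thesis unfolding mu_Fr_linked_def by blast
qed

end
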